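(* Let $k\ge1$ and let $G$ be a finite $k$-connected graph with $|V_G|\ge k+1$. Then $k\le \mathrm{Ent}(G)\le \mathrm{Cycl}(G)$.
   Context: Graphs are finite and undirected. A graph is $k$-connected if one must remove at least $k$ vertices to disconnect it (by convention $K_m$, $m\ge3$, has connectivity $m-1$). $\mathrm{Cycl}(G)$ (cyclicity) is the minimum size of a feedback vertex set of the symmetric digraph of $G$ (each edge $uv$ viewed as the two arcs $(u,v),(v,u)$, so each edge forms a directed 2-cycle); equivalently the minimum size of an edge cover set, i.e. a set of vertices containing an endpoint of every edge. Entanglement: in the game $\mathrm{Ent}(G,k)$ Thief plays against $k$ cops. Initially no cop is placed and Thief picks a vertex. Each round, Cops may do nothing, place a new cop (at most $k$ in total) on Thief's current vertex, or move a placed cop to Thief's current vertex; then Thief must move along an edge to an adjacent vertex not occupied by a cop, and is caught (Cops win) if he cannot. Infinite plays are won by Thief. $\mathrm{Ent}(G)$ is the least $k$ for which Cops have a winning strategy. *)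

theory Defs
  imports Main
begin

definition graph :: "'a set \<Rightarrow> ('a \<Rightarrow> 'a \<Rightarrow> bool) \<Rightarrow> bool" where
  "graph V E \<longleftrightarrow> finite V \<and> (\<forall>x y. E x y \<longrightarrow> x \<in> V \<and> y \<in> V)
     \<and> (\<forall>x y. E x y \<longrightarrow> E y x) \<and> (\<forall>x. \<not> E x x)"

definition connected_on :: "'a set \<Rightarrow> ('a \<Rightarrow> 'a \<Rightarrow> bool) \<Rightarrow> bool" where
  "connected_on W E \<longleftrightarrow>
     (\<forall>x\<in>W. \<forall>y\<in>W. (\<lambda>a b. a \<in> W \<and> b \<in> W \<and> E a b)\<^sup>*\<^sup>* x y)"

text \<open>k-connected: more than k vertices and removing fewer than k vertices leaves
  the graph connected (so K_m has connectivity m-1).\<close>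
definition k_connected :: "'a set \<Rightarrow> ('a \<Rightarrow> 'a \<Rightarrow> bool) \<Rightarrow> nat \<Rightarrow> bool" where
  "k_connected V E k \<longleftrightarrow> k < card V \<and>
     (\<forall>S. S \<subseteq> V \<and> card S < k \<longrightarrow> connected_on (V - S) E)"

definition cyclicity :: "'a set \<Rightarrow> ('a \<Rightarrow> 'a \<Rightarrow> bool) \<Rightarrow> nat" where
  "cyclicity V E = (LEAST n. \<exists>C. C \<subseteq> V \<and> card C = n \<and>
      (\<forall>x y. E x y \<longrightarrow> x \<in> C \<or> y \<in> C))"

text \<open>A position is (v, C): Thief's current vertex v and the set C
  of vertices occupied by cops (cops occupy distinct vertices, so card C is the number
  of cops placed so far).\<close>
definition cop_move :: "nat \<Rightarrow> 'a \<Rightarrow> 'a set \<Rightarrow> 'a set \<Rightarrow> bool" where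
  "cop_move k v C C' \<longleftrightarrow> C' = C \<or> (card C < k \<and> C' = insert v C)
     \<or> (\<exists>u\<in>C. C' = insert v (C - {u}))"

text \<open>Histories (list of positions, latest last) consistent with the cop strategy
  sigma, which maps a history to the new cop placement.\<close>
inductive_set histories :: "'a set \<Rightarrow> ('a \<Rightarrow> 'a \<Rightarrow> bool)
    \<Rightarrow> (('a \<times> 'a set) list \<Rightarrow> 'a set) \<Rightarrow> ('a \<times> 'a set) list set"
  for V E \<sigma> where
  start: "v \<in> V \<Longrightarrow> [(v, {})] \<in> histories V E \<sigma>"
| step: "h \<in> histories V E \<sigma> \<Longrightarrow> E (fst (last h)) w \<Longrightarrow> w \<notin> \<sigma> h
          \<Longrightarrow> h @ [(w, \<sigma> h)] \<in> histories V E \<sigma>"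

text \<open>sigma is a winning strategy for k cops: along every consistent history it makes a
  legal move, and there is no infinite play consistent with it (so every play ends with
  Thief unable to move, i.e. caught).\<close>
definition cops_winning_strategy ::
  "'a set \<Rightarrow> ('a \<Rightarrow> 'a \<Rightarrow> bool) \<Rightarrow> nat \<Rightarrow> (('a \<times> 'a set) list \<Rightarrow> 'a set) \<Rightarrow> bool" where
  "cops_winning_strategy V E k \<sigma> \<longleftrightarrow>
     (\<forall>h\<in>histories V E \<sigma>. cop_move k (fst (last h)) (snd (last h)) (\<sigma> h))
     \<and> \<not> (\<exists>p :: nat \<Rightarrow> 'a \<times> 'a set. \<forall>n. map p [0..<Suc n] \<in> histories V E \<sigma>)"

definition cops_win :: "'a set \<Rightarrow> ('a \<Rightarrow> 'a \<Rightarrow> bool) \<Rightarrow> nat \<Rightarrow> bool" where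
  "cops_win V E k \<longleftrightarrow> (\<exists>\<sigma>. cops_winning_strategy V E k \<sigma>)"

definition entanglement :: "'a set \<Rightarrow> ('a \<Rightarrow> 'a \<Rightarrow> bool) \<Rightarrow> nat" where
  "entanglement V E = (LEAST k. cops_win V E k)"

end

theory Submission
  imports Defs
begin

lemma cover_win:
  assumes g: "graph V E" and CV: "C \<subseteq> V" and cov: "\<forall>x y. E x y \<longrightarrow> x \<in> C \<or> y \<in> C"
  shows "cops_win V E (card C)"
proof -
  have fC: "finite C" using g CV unfolding graph_def by (meson finite_subset)
  define \<sigma> where "\<sigma> = (\<lambda>h::('a \<times> 'a set) list. if fst (last h) \<in> C then insert (fst (last h)) (snd (last h)) else snd (last h))"
  have inv: "h \<in> histories V E \<sigma> \<Longrightarrow> snd (last h) \<subseteq> C \<and> fst (last h) \<notin> snd (last h) \<and> h \<noteq> []" for h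
    by (induction rule: histories.induct) (auto simp: \<sigma>_def split: if_splits)
  have legal: "\<forall>h\<in>histories V E \<sigma>. cop_move (card C) (fst (last h)) (snd (last h)) (\<sigma> h)"
  proof
    fix h assume h: "h \<in> histories V E \<sigma>"
    from inv[OF h] have s: "snd (last h) \<subseteq> C" "fst (last h) \<notin> snd (last h)" by auto
    show "cop_move (card C) (fst (last h)) (snd (last h)) (\<sigma> h)"
    proof (cases "fst (last h) \<in> C")
      case True
      then have "snd (last h) \<subset> C" using s by auto
      then have "card (snd (last h)) < card C" using fC by (simp add: psubset_card_mono)
      then show ?thesis using True unfolding cop_move_def \<sigma>_def by simp
    next
      case False then show ?thesis unfolding cop_move_def \<sigma>_def by simp
    qed
  qed
  have noinf: "\<not> (\<exists>p :: nat \<Rightarrow> 'a \<times> 'a set. \<forall>n. map p [0..<Suc n] \<in> histories V E \<sigma>)"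
  proof
    assume "\<exists>p :: nat \<Rightarrow> 'a \<times> 'a set. \<forall>n. map p [0..<Suc n] \<in> histories V E \<sigma>"
    then obtain p :: "nat \<Rightarrow> 'a \<times> 'a set" where p: "\<And>n. map p [0..<Suc n] \<in> histories V E \<sigma>" by blast
    have lastp: "last (map p [0..<Suc n]) = p n" for n by simp
    have step: "fst (p (Suc n)) \<notin> \<sigma> (map p [0..<Suc n]) \<and> snd (p (Suc n)) = \<sigma> (map p [0..<Suc n])
         \<and> E (fst (p n)) (fst (p (Suc n)))" for n
    proof -
      have "map p [0..<Suc (Suc n)] \<in> histories V E \<sigma>" by (rule p)
      then show ?thesis
      proof (cases rule: histories.cases)
        case (start v) then show ?thesis by simp
      next
        case (step h w)
        have "map p [0..<Suc (Suc n)] = map p [0..<Suc n] @ [p (Suc n)]" by simp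
        with step(1) have "h = map p [0..<Suc n]" "(w, \<sigma> h) = p (Suc n)" by auto
        with step show ?thesis by (metis fst_conv snd_conv lastp)
      qed
    qed
    have sub: "snd (p n) \<subseteq> C" for n using inv[OF p[of n]] by simp
    have nin: "fst (p n) \<notin> snd (p n)" for n using inv[OF p[of n]] by simp
    have mono1: "snd (p n) \<subseteq> snd (p (Suc n))" for n
      using step[of n] by (auto simp: \<sigma>_def)
    have grow1: "fst (p n) \<in> C \<Longrightarrow> card (snd (p n)) < card (snd (p (Suc n)))" for n
    proof -
      assume a: "fst (p n) \<in> C"
      have "snd (p (Suc n)) = insert (fst (p n)) (snd (p n))" using step[of n] a by (simp add: \<sigma>_def)
      moreover have "finite (snd (p n))" using sub fC finite_subset by blast
      ultimately show ?thesis using nin[of n] by simp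
    qed
    have fin: "finite (snd (p n))" for n using sub fC finite_subset by blast
    have le1: "card (snd (p n)) \<le> card (snd (p (Suc n)))" for n
      using mono1 fin card_mono by blast
    have grow2: "card (snd (p n)) < card (snd (p (Suc (Suc n))))" for n
    proof -
      have "fst (p n) \<in> C \<or> fst (p (Suc n)) \<in> C" using cov step[of n] by blast
      then show ?thesis using grow1[of n] grow1[of "Suc n"] le1[of n] le1[of "Suc n"] by linarith
    qed
    have "m \<le> card (snd (p (2*m)))" for m
    proof (induction m)
      case 0 then show ?case by simp
    next
      case (Suc m) then show ?case using grow2[of "2*m"] by simp
    qed
    moreover have "card (snd (p n)) \<le> card C" for n using sub fC card_mono by blast
    ultimately show False by (metis Suc_n_not_le_n le_trans)
  qed
  show ?thesis unfolding cops_win_def cops_winning_strategy_def using legal noinf by blast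
qed

lemma degree:
  assumes g: "graph V E" and kc: "k_connected V E k" and c: "k + 1 \<le> card V" and v: "v \<in> V"
  shows "k \<le> card {w. E v w}"
proof (rule ccontr)
  let ?N = "{w. E v w}"
  assume "\<not> k \<le> card ?N"
  then have lt: "card ?N < k" by simp
  have NV: "?N \<subseteq> V" using g unfolding graph_def by blast
  have fV: "finite V" using g unfolding graph_def by blast
  have con: "connected_on (V - ?N) E" using kc lt NV unfolding k_connected_def by blast
  have vin: "v \<in> V - ?N" using v g unfolding graph_def by blast
  have "card (V - ?N) = card V - card ?N" using NV fV by (meson card_Diff_subset finite_subset)
  then have "card (V - ?N) \<ge> 2" using lt c by linarith
  then have "\<not> (V - ?N) \<subseteq> {v}" using card_mono[of "{v}" "V - ?N"] by (metis card.empty card.insert finite.emptyI finite.insertI empty_iff numeral_2_eq_2 not_less_eq_eq le_SucI card_mono finite_subset)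
  then obtain u where u: "u \<in> V - ?N" "u \<noteq> v" by blast
  have "(\<lambda>a b. a \<in> V - ?N \<and> b \<in> V - ?N \<and> E a b)\<^sup>*\<^sup>* v u" using con vin u unfolding connected_on_def by blast
  then show False
  proof (cases rule: converse_rtranclpE)
    case base then show ?thesis using u by simp
  next
    case (step x) then show ?thesis by blast
  qed
qed


lemma aux: "finite A \<Longrightarrow> u \<in> A \<Longrightarrow> card (insert v (A - {u})) \<le> card A"
proof -
  assume f: "finite A" and u: "u \<in> A"
  have "card (insert v (A - {u})) \<le> Suc (card (A - {u}))" using f by (simp add: card_insert_if)
  also have "Suc (card (A - {u})) = card A" using f u using card_Suc_Diff1 by metis
  finally show ?thesis .
qed

lemma thief:
  assumes g: "graph V E" and kc: "k_connected V E k" and c: "k + 1 \<le> card V" and j: "j < k"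
  shows "\<not> cops_win V E j"
proof
  assume "cops_win V E j"
  then obtain \<sigma> where leg: "\<And>h. h \<in> histories V E \<sigma> \<Longrightarrow> cop_move j (fst (last h)) (snd (last h)) (\<sigma> h)"
    and ninf: "\<not> (\<exists>p :: nat \<Rightarrow> 'a \<times> 'a set. \<forall>n. map p [0..<Suc n] \<in> histories V E \<sigma>)"
    unfolding cops_win_def cops_winning_strategy_def by blast
  have "V \<noteq> {}" using c by auto
  then obtain v0 where v0: "v0 \<in> V" by blast
  define nxt where "nxt = (\<lambda>h. SOME w. E (fst (last h)) w \<and> w \<notin> \<sigma> h)"
  define H where "H = rec_nat [(v0, {})] (\<lambda>n h. h @ [(nxt h, \<sigma> h)])"
  have H0: "H 0 = [(v0, {})]" and HS: "H (Suc n) = H n @ [(nxt (H n), \<sigma> (H n))]" for n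
    by (simp_all add: H_def)
  have inv: "H n \<in> histories V E \<sigma> \<and> fst (last (H n)) \<in> V \<and> finite (snd (last (H n))) \<and> card (snd (last (H n))) \<le> j" for n
  proof (induction n)
    case 0 then show ?case using v0 by (simp add: H0 histories.start)
  next
    case (Suc n)
    let ?h = "H n" let ?v = "fst (last ?h)" let ?C = "snd (last ?h)"
    have mv: "cop_move j ?v ?C (\<sigma> ?h)" using leg Suc by blast
    have fC': "finite (\<sigma> ?h) \<and> card (\<sigma> ?h) \<le> j"
    proof -
      from mv consider "\<sigma> ?h = ?C" | "card ?C < j \<and> \<sigma> ?h = insert ?v ?C" | u where "u \<in> ?C" "\<sigma> ?h = insert ?v (?C - {u})"
        unfolding cop_move_def by blast
      then show ?thesis
      proof cases
        case 1 then show ?thesis using Suc by simp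
      next
        case 2 then show ?thesis using Suc by (simp add: card_insert_if)
      next
        case 3
        have f: "finite ?C" using Suc by simp
        have "card (\<sigma> ?h) \<le> card ?C" using aux[OF f 3(1)] 3(2) by simp
        then show ?thesis using Suc 3 f by simp
      qed
    qed
    have deg: "k \<le> card {w. E ?v w}" using degree[OF g kc c] Suc by blast
    have "\<not> {w. E ?v w} \<subseteq> \<sigma> ?h"
    proof
      assume "{w. E ?v w} \<subseteq> \<sigma> ?h"
      then have "card {w. E ?v w} \<le> card (\<sigma> ?h)" using fC' card_mono by blast
      then show False using deg fC' j by linarith
    qed
    then have "\<exists>w. E ?v w \<and> w \<notin> \<sigma> ?h" by blast
    then have w: "E ?v (nxt ?h) \<and> nxt ?h \<notin> \<sigma> ?h" unfolding nxt_def by (rule someI_ex)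
    have "H (Suc n) \<in> histories V E \<sigma>" unfolding HS using Suc w by (blast intro: histories.step)
    moreover have "nxt ?h \<in> V" using w g unfolding graph_def by blast
    ultimately show ?case using fC' by (simp add: HS)
  qed
  have len: "length (H n) = Suc n" for n by (induction n) (simp_all add: H0 HS)
  have nth: "i \<le> m \<Longrightarrow> H m ! i = H i ! i" for i m
  proof (induction m)
    case 0 then show ?case by simp
  next
    case (Suc m) then show ?case
      by (cases "i = Suc m") (simp_all add: HS nth_append len)
  qed
  have "map (\<lambda>i. H i ! i) [0..<Suc n] = H n" for n
  proof (rule nth_equalityI)
    show "length (map (\<lambda>i. H i ! i) [0..<Suc n]) = length (H n)" by (simp add: len)
    fix i assume "i < length (map (\<lambda>i. H i ! i) [0..<Suc n])"
    then have "i \<le> n" by simp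
    then show "map (\<lambda>i. H i ! i) [0..<Suc n] ! i = H n ! i" 
    proof -
      have "map (\<lambda>i. H i ! i) [0..<Suc n] ! i = H i ! i" using \<open>i \<le> n\<close> by (subst nth_map_upt) auto
      then show ?thesis using nth[OF \<open>i \<le> n\<close>] by simp
    qed
  qed
  then have "\<forall>n. map (\<lambda>i. H i ! i) [0..<Suc n] \<in> histories V E \<sigma>" using inv by simp
  then show False using ninf by blast
qed

theorem mainTheorem7:
  fixes V :: "'a set" and E :: "'a \<Rightarrow> 'a \<Rightarrow> bool" and k :: nat
  assumes "graph V E" and "1 \<le> k" and "k_connected V E k" and "k + 1 \<le> card V"
  shows "k \<le> entanglement V E \<and> entanglement V E \<le> cyclicity V E"
proof -
  let ?P = "\<lambda>n. \<exists>C. C \<subseteq> V \<and> card C = n \<and> (\<forall>x y. E x y \<longrightarrow> x \<in> C \<or> y \<in> C)"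
  have "?P (card V)" using assms(1) unfolding graph_def by blast
  then have "?P (cyclicity V E)" unfolding cyclicity_def by (rule LeastI)
  then obtain C where C: "C \<subseteq> V" "card C = cyclicity V E" "\<forall>x y. E x y \<longrightarrow> x \<in> C \<or> y \<in> C" by blast
  have w: "cops_win V E (cyclicity V E)" using cover_win[OF assms(1) C(1) C(3)] C(2) by simp
  have le: "entanglement V E \<le> cyclicity V E" unfolding entanglement_def using w by (rule Least_le)
  have "cops_win V E (entanglement V E)" unfolding entanglement_def using w by (rule LeastI)
  then have "k \<le> entanglement V E" using thief[OF assms(1) assms(3) assms(4)] by (meson not_le)
  with le show ?thesis by simp
qed

end
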